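(* Let $f:\mathcal X^n\to\mathcal T$ with $\mathcal T$ finite, $\varepsilon>0$, and $L_{0,1}(s,t)=\mathbf 1\{s\ne t\}$. Let $M$ be the discrete inverse sensitivity mechanism run with privacy parameter $4\varepsilon$. Then $M$ is $4\varepsilon$-differentially private, and for every $\varepsilon$-differentially private $L_{0,1}$-unbiased mechanism $M_{\mathrm{unb}}$ and every $x\in\mathcal X^n$, $$\mathbb E[L_{0,1}(M(x),f(x))]\le \mathbb E[L_{0,1}(M_{\mathrm{unb}}(x),f(x))].$$ That is, the inverse sensitivity mechanism is $4$-optimal against $L_{0,1}$-unbiased mechanisms.
   Context: $d_H$ is the Hamming distance on $\mathcal X^n$; $x,x'$ are neighboring if $d_H(x,x')\le1$. A mechanism $M$ is $\varepsilon$-differentially private if $\mathbb P(M(x)\in S)\le e^\varepsilon\mathbb P(M(x')\in S)$ for all neighboring $x,x'$ and measurable $S$. A mechanism $M$ is $L$-unbiased if $\mathbb E[L(M(x),f(x))]\le\mathbb E[L(M(x),t)]$ for all $x\in\mathcal X^n$, $t\in\mathcal T$. The inverse sensitivity is $\mathrm{len}_f(x;t)=\inf\{d_H(x,x'):f(x')=t\}$ ($\inf\emptyset=+\infty$, $e^{-\infty}=0$), and the discrete inverse sensitivity mechanism with parameter $\varepsilon'$ outputs $t$ with probability $e^{-\mathrm{len}_f(x;t)\varepsilon'/2}\big/\sum_{s\in\mathcal T}e^{-\mathrm{len}_f(x;s)\varepsilon'/2}$. *)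

theory Defs
  imports "HOL-Probability.Probability" "HOL-Library.Extended_Nat"
begin

definition datasets :: "nat \<Rightarrow> 'x list set" where
  "datasets n = {x. length x = n}"

definition hamming :: "'x list \<Rightarrow> 'x list \<Rightarrow> nat" where
  "hamming x x' = card {i. i < length x \<and> x ! i \<noteq> x' ! i}"

definition neighboring :: "'x list \<Rightarrow> 'x list \<Rightarrow> bool" where
  "neighboring x x' \<longleftrightarrow> hamming x x' \<le> 1"

definition diff_private :: "nat \<Rightarrow> real \<Rightarrow> ('x list \<Rightarrow> 't pmf) \<Rightarrow> bool" where
  "diff_private n \<epsilon> M \<longleftrightarrow>
     (\<forall>x\<in>datasets n. \<forall>x'\<in>datasets n. neighboring x x' \<longrightarrow>
        (\<forall>S. measure_pmf.prob (M x) S \<le> exp \<epsilon> * measure_pmf.prob (M x') S))"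

definition expected_loss :: "('t \<Rightarrow> 't \<Rightarrow> real) \<Rightarrow> 't pmf \<Rightarrow> 't \<Rightarrow> real" where
  "expected_loss L p t = measure_pmf.expectation p (\<lambda>s. L s t)"

definition unbiased :: "nat \<Rightarrow> ('t \<Rightarrow> 't \<Rightarrow> real) \<Rightarrow> ('x list \<Rightarrow> 't) \<Rightarrow> ('x list \<Rightarrow> 't pmf) \<Rightarrow> bool" where
  "unbiased n L f M \<longleftrightarrow>
     (\<forall>x\<in>datasets n. \<forall>t. expected_loss L (M x) (f x) \<le> expected_loss L (M x) t)"

definition loss01 :: "'t \<Rightarrow> 't \<Rightarrow> real" where
  "loss01 s t = (if s \<noteq> t then 1 else 0)"

text \<open>Inverse sensitivity (infimum over the empty set is \<infinity>).\<close>
definition inv_len :: "nat \<Rightarrow> ('x list \<Rightarrow> 't) \<Rightarrow> 'x list \<Rightarrow> 't \<Rightarrow> enat" where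
  "inv_len n f x t = Inf ((\<lambda>x'. enat (hamming x x')) ` {x'\<in>datasets n. f x' = t})"

definition inv_weight :: "nat \<Rightarrow> ('x list \<Rightarrow> 't) \<Rightarrow> real \<Rightarrow> 'x list \<Rightarrow> 't \<Rightarrow> real" where
  "inv_weight n f \<epsilon>' x t =
     (case inv_len n f x t of enat k \<Rightarrow> exp (- real k * \<epsilon>' / 2) | \<infinity> \<Rightarrow> 0)"

definition inv_sens_mech :: "nat \<Rightarrow> ('x list \<Rightarrow> 't::finite) \<Rightarrow> real \<Rightarrow> 'x list \<Rightarrow> 't pmf" where
  "inv_sens_mech n f \<epsilon>' x =
     embed_pmf (\<lambda>t. inv_weight n f \<epsilon>' x t / (\<Sum>s\<in>UNIV. inv_weight n f \<epsilon>' x s))"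

end

theory Submission
  imports Defs
begin

lemma hamming_fin: "finite {i. i < length x \<and> x ! i \<noteq> x' ! i}"
  by (rule finite_subset[of _ "{..<length x}"]) auto

lemma hamming_self[simp]: "hamming x x = 0"
  unfolding hamming_def by simp

lemma hamming_sym: "length x = length y \<Longrightarrow> hamming x y = hamming y x"
  unfolding hamming_def by (metis)

lemma hamming_zero: assumes "length x = length y" "hamming x y = 0" shows "x = y"
proof -
  have "{i. i < length x \<and> x ! i \<noteq> y ! i} = {}"
    using assms(2) hamming_fin[of x y] unfolding hamming_def by simp
  then show ?thesis using assms(1) by (auto intro: nth_equalityI)
qed

lemma hamming_tri:
  assumes "length x = length y" "length y = length z"
  shows "hamming x z \<le> hamming x y + hamming y z"
proof -
  have "{i. i < length x \<and> x ! i \<noteq> z ! i} \<subseteq>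
        {i. i < length x \<and> x ! i \<noteq> y ! i} \<union> {i. i < length y \<and> y ! i \<noteq> z ! i}"
    using assms by auto
  then have "hamming x z \<le> card ({i. i < length x \<and> x ! i \<noteq> y ! i} \<union> {i. i < length y \<and> y ! i \<noteq> z ! i})"
    unfolding hamming_def using hamming_fin by (intro card_mono) auto
  also have "\<dots> \<le> hamming x y + hamming y z" unfolding hamming_def by (rule card_Un_le)
  finally show ?thesis .
qed

lemma hamming_step:
  assumes "length x = length z" "hamming x z = Suc k"
  shows "\<exists>y. length y = length x \<and> hamming x y = 1 \<and> hamming y z = k"
proof -
  let ?D = "{i. i < length x \<and> x ! i \<noteq> z ! i}"
  have "?D \<noteq> {}" using assms(2) unfolding hamming_def by (metis card.empty nat.simps(3))
  then obtain i where i: "i < length x" "x ! i \<noteq> z ! i" by auto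
  define y where "y = x[i := z ! i]"
  have ly: "length y = length x" unfolding y_def by simp
  have "{j. j < length x \<and> x ! j \<noteq> y ! j} = {i}" using i unfolding y_def
    by (auto simp: nth_list_update)
  then have h1: "hamming x y = 1" unfolding hamming_def by simp
  have "{j. j < length y \<and> y ! j \<noteq> z ! j} = ?D - {i}" using i ly unfolding y_def
    by (auto simp: nth_list_update)
  then have "hamming y z = card ?D - 1" unfolding hamming_def using i hamming_fin by simp
  then have "hamming y z = k" using assms(2) unfolding hamming_def by simp
  then show ?thesis using ly h1 by blast
qed

lemma dp_pmf:
  assumes "diff_private n \<epsilon> M" "x \<in> datasets n" "y \<in> datasets n" "hamming x y \<le> 1"
  shows "pmf (M x) t \<le> exp \<epsilon> * pmf (M y) t"
  using assms unfolding diff_private_def neighboring_def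
  by (metis measure_pmf_single)

lemma group_priv:
  assumes "diff_private n \<epsilon> M"
  shows "x \<in> datasets n \<Longrightarrow> z \<in> datasets n \<Longrightarrow> hamming x z = k \<Longrightarrow>
     pmf (M x) t \<le> exp (real k * \<epsilon>) * pmf (M z) t"
proof (induction k arbitrary: x)
  case 0
  then have "x = z" using hamming_zero[of x z] unfolding datasets_def by auto
  then show ?case by simp
next
  case (Suc k)
  then obtain y where y: "length y = length x" "hamming x y = 1" "hamming y z = k"
    using hamming_step[of x z k] unfolding datasets_def by auto
  have yd: "y \<in> datasets n" using y Suc.prems unfolding datasets_def by auto
  have "pmf (M x) t \<le> exp \<epsilon> * pmf (M y) t"
    using dp_pmf[OF assms Suc.prems(1) yd] y by simp
  also have "\<dots> \<le> exp \<epsilon> * (exp (real k * \<epsilon>) * pmf (M z) t)"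
    using Suc.IH[OF yd Suc.prems(2) y(3)] by (intro mult_left_mono) auto
  also have "\<dots> = exp (real (Suc k) * \<epsilon>) * pmf (M z) t"
    by (simp add: exp_add[symmetric] algebra_simps)
  finally show ?case .
qed

lemma inv_len_le:
  "z \<in> datasets n \<Longrightarrow> f z = t \<Longrightarrow> inv_len n f x t \<le> enat (hamming x z)"
  unfolding inv_len_def by (rule Inf_lower) auto

lemma inv_len_attained:
  assumes "z \<in> datasets n" "f z = t"
  shows "\<exists>w\<in>datasets n. f w = t \<and> inv_len n f x t = enat (hamming x w)"
proof -
  have "inv_len n f x t \<in> (\<lambda>x'. enat (hamming x x')) ` {x'\<in>datasets n. f x' = t}"
    unfolding inv_len_def by (rule wellorder_InfI[of "enat (hamming x z)"]) (use assms in auto)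
  then show ?thesis by auto
qed

lemma inv_len_empty:
  "\<not>(\<exists>z\<in>datasets n. f z = t) \<Longrightarrow> inv_len n f x t = \<infinity>"
  unfolding inv_len_def by (auto simp: top_enat_def[symmetric])

lemma inv_weight_nonneg: "inv_weight n f e x t \<ge> 0"
  unfolding inv_weight_def by (auto split: enat.split)

lemma inv_weight_self:
  assumes "x \<in> datasets n" shows "inv_weight n f e x (f x) = 1"
proof -
  have "inv_len n f x (f x) \<le> enat 0" using inv_len_le[OF assms, of f "f x" x] by simp
  then have "inv_len n f x (f x) = 0" by (simp add: zero_enat_def[symmetric])
  then show ?thesis unfolding inv_weight_def by (simp add: zero_enat_def)
qed

lemma inv_weight_nb:
  assumes "e \<ge> 0" "x \<in> datasets n" "y \<in> datasets n" "hamming x y \<le> 1"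
  shows "inv_weight n f e y t \<le> exp (e/2) * inv_weight n f e x t"
proof (cases "\<exists>z\<in>datasets n. f z = t")
  case False
  then show ?thesis unfolding inv_weight_def using inv_len_empty[OF False] by simp
next
  case True
  then obtain z where z: "z \<in> datasets n" "f z = t" by auto
  obtain w where w: "w \<in> datasets n" "f w = t" "inv_len n f x t = enat (hamming x w)"
    using inv_len_attained[of z n f t x] z by blast
  obtain v where v: "v \<in> datasets n" "f v = t" "inv_len n f y t = enat (hamming y v)"
    using inv_len_attained[of z n f t y] z by blast
  have "inv_len n f x t \<le> enat (hamming x v)" using inv_len_le[of v n f t x] v by simp
  then have "hamming x w \<le> hamming x v" using w by simp
  also have "\<dots> \<le> hamming x y + hamming y v"
    using assms v unfolding datasets_def by (intro hamming_tri) auto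
  finally have le: "real (hamming x w) \<le> real (hamming y v) + 1" using assms(4) by linarith
  have "exp (- real (hamming y v) * e / 2) = exp (e/2) * exp (- (real (hamming y v) + 1) * e / 2)"
    by (subst exp_add[symmetric]) (rule arg_cong[where f=exp]; simp add: field_simps)
  also have "\<dots> \<le> exp (e/2) * exp (- real (hamming x w) * e / 2)"
  proof -
    have "real (hamming x w) * e \<le> (real (hamming y v) + 1) * e"
      using le assms(1) by (rule mult_right_mono)
    then have "- (real (hamming y v) + 1) * e / 2 \<le> - real (hamming x w) * e / 2" by (simp add: algebra_simps)
    then show ?thesis by (intro mult_left_mono) auto
  qed
  finally show ?thesis unfolding inv_weight_def using v w by simp
qed

lemma pmf_ism:
  assumes "x \<in> datasets n"
  shows "pmf (inv_sens_mech n f e x) t = inv_weight n f e x t / (\<Sum>s\<in>UNIV. inv_weight n f e x s)"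
    and "(\<Sum>s\<in>UNIV. inv_weight n f e x s) \<ge> 1"
proof -
  let ?W = "\<Sum>s\<in>UNIV. inv_weight n f e x s"
  have "?W \<ge> inv_weight n f e x (f x)"
    by (rule member_le_sum) (auto simp: inv_weight_nonneg)
  then show W: "?W \<ge> 1" using inv_weight_self[OF assms, where f=f and e=e] by simp
  have "(\<integral>\<^sup>+ s. ennreal (inv_weight n f e x s / ?W) \<partial>count_space UNIV)
      = (\<Sum>s\<in>UNIV. ennreal (inv_weight n f e x s / ?W))"
    by (simp add: nn_integral_count_space_finite)
  also have "\<dots> = ennreal (\<Sum>s\<in>UNIV. inv_weight n f e x s / ?W)"
    using W by (intro sum_ennreal) (auto simp: inv_weight_nonneg)
  also have "(\<Sum>s\<in>UNIV. inv_weight n f e x s / ?W) = 1"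
    using W by (simp add: sum_divide_distrib[symmetric])
  finally have "(\<integral>\<^sup>+ s. ennreal (inv_weight n f e x s / ?W) \<partial>count_space UNIV) = 1" by simp
  then show "pmf (inv_sens_mech n f e x) t = inv_weight n f e x t / ?W"
    unfolding inv_sens_mech_def using W
    by (subst pmf_embed_pmf) (auto simp: inv_weight_nonneg)
qed

lemma exp_loss01: "expected_loss loss01 p t = 1 - pmf p t"
proof -
  have "(\<lambda>s. loss01 s t) = indicator (- {t})"
    by (auto simp: loss01_def indicator_def)
  then have "expected_loss loss01 p t = measure_pmf.prob p (- {t})"
    unfolding expected_loss_def
    by (simp add: measure_pmf.emeasure_eq_measure)
  also have "\<dots> = 1 - pmf p t"
    using measure_pmf.prob_compl[of "{t}" p] by (simp add: Compl_eq_Diff_UNIV measure_pmf_single)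
  finally show ?thesis .
qed

theorem corollary3p1:
  fixes f :: "'x list \<Rightarrow> 't::finite" and n :: nat and \<epsilon> :: real
  assumes "\<epsilon> > 0"
  shows "diff_private n (4 * \<epsilon>) (inv_sens_mech n f (4 * \<epsilon>)) \<and>
    (\<forall>Munb :: 'x list \<Rightarrow> 't pmf. diff_private n \<epsilon> Munb \<and> unbiased n loss01 f Munb \<longrightarrow>
       (\<forall>x\<in>datasets n.
          expected_loss loss01 (inv_sens_mech n f (4 * \<epsilon>) x) (f x)
            \<le> expected_loss loss01 (Munb x) (f x)))"
proof (intro conjI allI impI ballI)
  let ?e = "4 * \<epsilon>"
  let ?w = "inv_weight n f ?e"
  let ?W = "\<lambda>x. \<Sum>s\<in>UNIV. ?w x s"
  have e2: "?e / 2 = 2 * \<epsilon>" by simp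
  show "diff_private n ?e (inv_sens_mech n f ?e)"
    unfolding diff_private_def
  proof (intro ballI impI allI)
    fix x x' :: "'x list" and S assume x: "x \<in> datasets n" and x': "x' \<in> datasets n" and nb: "neighboring x x'"
    have h1: "hamming x x' \<le> 1" using nb unfolding neighboring_def .
    have h2: "hamming x' x \<le> 1" using h1 x x' hamming_sym unfolding datasets_def by (metis mem_Collect_eq)
    have wle: "?w x t \<le> exp (2*\<epsilon>) * ?w x' t" for t
      using inv_weight_nb[of ?e x' n x f t] assms x x' h2 by simp
    have Wle: "?W x' \<le> exp (2*\<epsilon>) * ?W x"
    proof -
      have "?W x' \<le> (\<Sum>s\<in>UNIV. exp (2*\<epsilon>) * ?w x s)"
        using inv_weight_nb[of ?e x n x' f] assms x x' h1 by (intro sum_mono) simp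
      then show ?thesis by (simp add: sum_distrib_left)
    qed
    have Wx: "?W x \<ge> 1" using pmf_ism(2)[OF x] .
    have Wx': "?W x' \<ge> 1" using pmf_ism(2)[OF x'] .
    have "measure_pmf.prob (inv_sens_mech n f ?e x) S = (\<Sum>t\<in>S. ?w x t) / ?W x"
      by (simp add: measure_measure_pmf_finite pmf_ism(1)[OF x] sum_divide_distrib)
    also have "\<dots> \<le> (exp (2*\<epsilon>) * (\<Sum>t\<in>S. ?w x' t)) / ?W x"
      using Wx wle by (intro divide_right_mono) (auto simp: sum_distrib_left intro!: sum_mono)
    also have "\<dots> \<le> (exp (2*\<epsilon>) * (\<Sum>t\<in>S. ?w x' t)) / (?W x' / exp (2*\<epsilon>))"
      using Wle Wx Wx' by (intro divide_left_mono mult_nonneg_nonneg sum_nonneg)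
        (auto simp: inv_weight_nonneg field_simps)
    also have "\<dots> = exp (4*\<epsilon>) * ((\<Sum>t\<in>S. ?w x' t) / ?W x')"
      by (simp add: field_simps mult_exp_exp)
    also have "(\<Sum>t\<in>S. ?w x' t) / ?W x' = measure_pmf.prob (inv_sens_mech n f ?e x') S"
      by (simp add: measure_measure_pmf_finite pmf_ism(1)[OF x'] sum_divide_distrib)
    finally show "measure_pmf.prob (inv_sens_mech n f ?e x) S
       \<le> exp ?e * measure_pmf.prob (inv_sens_mech n f ?e x') S" .
  qed
next
  fix Munb :: "'x list \<Rightarrow> 't pmf" and x :: "'x list"
  assume H: "diff_private n \<epsilon> Munb \<and> unbiased n loss01 f Munb" and x: "x \<in> datasets n"
  let ?e = "4 * \<epsilon>"
  let ?w = "inv_weight n f ?e"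
  let ?W = "\<lambda>x. \<Sum>s\<in>UNIV. ?w x s"
  have dp: "diff_private n \<epsilon> Munb" and ub: "unbiased n loss01 f Munb" using H by auto
  let ?p0 = "pmf (Munb x) (f x)"
  have key: "?w x t * ?p0 \<le> pmf (Munb x) t" for t
  proof (cases "\<exists>z\<in>datasets n. f z = t")
    case False
    then show ?thesis unfolding inv_weight_def using inv_len_empty[OF False] by simp
  next
    case True
    then obtain z where z: "z \<in> datasets n" "f z = t" by auto
    obtain w where w: "w \<in> datasets n" "f w = t" "inv_len n f x t = enat (hamming x w)"
      using inv_len_attained[of z n f t x] z by blast
    define k where "k = hamming x w"
    have kw: "hamming w x = k" unfolding k_def using x w(1) hamming_sym unfolding datasets_def
      by (metis mem_Collect_eq)
    have g1: "pmf (Munb w) t \<le> exp (real k * \<epsilon>) * pmf (Munb x) t"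
      using group_priv[OF dp w(1) x kw] .
    have g2: "?p0 \<le> exp (real k * \<epsilon>) * pmf (Munb w) (f x)"
      using group_priv[OF dp x w(1)] k_def by simp
    have u: "pmf (Munb w) (f x) \<le> pmf (Munb w) t"
      using ub w unfolding unbiased_def by (auto simp: exp_loss01)
    have "?p0 \<le> exp (real k * \<epsilon>) * (exp (real k * \<epsilon>) * pmf (Munb x) t)"
      using g2 u g1 by (meson dual_order.trans exp_ge_zero mult_left_mono)
    then have "?p0 \<le> exp (2 * real k * \<epsilon>) * pmf (Munb x) t"
      by (simp add: mult_exp_exp algebra_simps)
    then have "exp (- (2 * real k * \<epsilon>)) * ?p0 \<le> pmf (Munb x) t"
      by (simp add: exp_minus field_simps)
    moreover have "?w x t = exp (- (2 * real k * \<epsilon>))"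
      unfolding inv_weight_def using w(3) k_def by simp
    ultimately show ?thesis by (simp add: mult.commute)
  qed
  have "?W x * ?p0 \<le> (\<Sum>t\<in>UNIV. pmf (Munb x) t)"
    unfolding sum_distrib_right by (intro sum_mono key)
  also have "\<dots> = 1" using measure_measure_pmf_finite[of UNIV "Munb x"] by simp
  finally have p0: "?W x * ?p0 \<le> 1" .
  have Wx: "?W x \<ge> 1" using pmf_ism(2)[OF x] .
  have "pmf (inv_sens_mech n f ?e x) (f x) = 1 / ?W x"
    using pmf_ism(1)[OF x, where f=f and e="?e" and t="f x"] inv_weight_self[OF x, where f=f and e="?e"] by simp
  moreover have "?p0 \<le> 1 / ?W x" using p0 Wx by (simp add: field_simps)
  ultimately show "expected_loss loss01 (inv_sens_mech n f ?e x) (f x)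
            \<le> expected_loss loss01 (Munb x) (f x)"
    by (simp add: exp_loss01)
qed

end
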